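(* Let $g:[0,\infty)\to[0,1]$ be continuously differentiable and strictly decreasing, and let $$f(x)=1-e^{-x}\big[1-g(x)(x+1)\big]-\int_0^xg(z)e^{-z}\,dz .$$ Assume $\min_{x\ge0}f(x)=g(0)$. For $\tau,\tau'\ge0$ define $$H(\tau,\tau')=1-e^{-\tau'}-\int_0^{\tau'}g(z)e^{-z}\,dz+g(\tau')\cdot\begin{cases}\tau e^{-\tau'} & \tau\le\tau',\\ \tau'e^{-\tau'}+e^{-\tau'}-e^{-\tau} & \tau>\tau'.\end{cases}$$ Then $H(\tau,\tau')\ge g(0)\,(1-e^{-\tau})$ for all $\tau,\tau'\ge0$. *)

theory Defs
  imports "HOL-Analysis.Analysis"
begin

definition fF :: "(real \<Rightarrow> real) \<Rightarrow> real \<Rightarrow> real" where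
  "fF g x = 1 - exp (-x) * (1 - g x * (x + 1)) - integral {0..x} (\<lambda>z. g z * exp (-z))"

definition HH :: "(real \<Rightarrow> real) \<Rightarrow> real \<Rightarrow> real \<Rightarrow> real" where
  "HH g \<tau> \<tau>' = 1 - exp (-\<tau>') - integral {0..\<tau>'} (\<lambda>z. g z * exp (-z))
     + g \<tau>' * (if \<tau> \<le> \<tau>' then \<tau> * exp (-\<tau>')
               else \<tau>' * exp (-\<tau>') + exp (-\<tau>') - exp (-\<tau>))"

end

theory Submission
  imports Defs
begin

theorem mainTheorem14:
  fixes g :: "real \<Rightarrow> real"
  assumes range: "\<And>x. x \<ge> 0 \<Longrightarrow> g x \<in> {0..1}"
    and C1: "\<exists>g'. (\<forall>x\<ge>0. (g has_real_derivative g' x) (at x within {0..}))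
                 \<and> continuous_on {0..} g'"
    and decr: "strict_antimono_on {0..} g"
    and minf: "\<exists>x0. is_arg_min (fF g) (\<lambda>x. x \<ge> 0) x0 \<and> fF g x0 = g 0"
  shows "\<forall>\<tau>\<ge>0. \<forall>\<tau>'\<ge>0. HH g \<tau> \<tau>' \<ge> g 0 * (1 - exp (-\<tau>))"
proof (intro allI impI)
  fix t t' :: real assume t: "t \<ge> 0" and t': "t' \<ge> 0"
  obtain x0 where x0: "is_arg_min (fF g) (\<lambda>x. x \<ge> 0) x0" "fF g x0 = g 0" using minf by blast
  have fge: "fF g t' \<ge> g 0" using x0 t' unfolding is_arg_min_def by force
  have g0: "g t' \<le> g 0"
  proof (cases "t' = 0")
    case False
    then have "0 < t'" using t' by simp
    then show ?thesis using decr t' unfolding monotone_on_def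
      by (metis atLeast_iff less_eq_real_def order_refl)
  qed simp
  have gpos: "g t' \<ge> 0" using range t' by auto
  define I where "I = integral {0..t'} (\<lambda>z. g z * exp (-z))"
  have F: "fF g t' = 1 - exp (-t') * (1 - g t' * (t' + 1)) - I" unfolding fF_def I_def by simp
  show "HH g t t' \<ge> g 0 * (1 - exp (-t))"
  proof (cases "t \<le> t'")
    case True
    have H: "HH g t t' = 1 - exp (-t') - I + g t' * (t * exp (-t'))" unfolding HH_def I_def using True by simp
    have e1: "exp (t' - t) \<ge> 1 + (t' - t)" using exp_ge_add_one_self by simp
    have "exp (-t) = exp (-t') * exp (t' - t)" by (simp add: exp_add[symmetric])
    hence e: "exp (-t) - exp (-t') \<ge> exp (-t') * (t' - t)"
    proof -
      have "exp (-t') * (1 + (t' - t)) \<le> exp (-t') * exp (t' - t)"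
        using e1 by (intro mult_left_mono) auto
      then show ?thesis using \<open>exp (-t) = _\<close> by (simp add: algebra_simps)
    qed
    have "g t' * (exp (-t') * (t' - t)) \<le> g 0 * (exp (-t) - exp (-t'))"
    proof -
      have "g t' * (exp (-t') * (t' - t)) \<le> g 0 * (exp (-t') * (t' - t))"
        using g0 True by (intro mult_right_mono) auto
      also have "\<dots> \<le> g 0 * (exp (-t) - exp (-t'))"
        using e g0 gpos by (intro mult_left_mono) auto
      finally show ?thesis .
    qed
    hence K: "(t' - t) * (g t' * exp (-t')) \<le> g 0 * exp (-t) - g 0 * exp (-t')"
      by (simp add: algebra_simps)
    have GE: "g t' * exp (-t') \<le> g 0 * exp (-t')" using g0 by simp
    have HF: "HH g t t' = fF g t' - g t' * exp (-t') - (t' - t) * (g t' * exp (-t'))"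
      using H F by (simp add: algebra_simps)
    show ?thesis using HF K GE fge by (simp only: right_diff_distrib)
  next
    case False
    have H: "HH g t t' = 1 - exp (-t') - I + g t' * (t' * exp (-t') + exp (-t') - exp (-t))"
      unfolding HH_def I_def using False by simp
    have GE2: "g t' * exp (-t) \<le> g 0 * exp (-t)" using g0 by simp
    have HF2: "HH g t t' = fF g t' - g t' * exp (-t)"
      using H F by (simp add: algebra_simps)
    show ?thesis using HF2 GE2 fge by (simp only: right_diff_distrib mult_1_right)
  qed
qed

end
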